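(* Assume $CA^\Delta$. Then there is a metric $d$ on $\omega_1$ such that the metric space $(\omega_1,d)$ has no uncountable monotone subspace.
   Context: For $c>0$, a metric space $(Y,d)$ is $c$-monotone if there is a linear order $\prec$ on $Y$ such that $d(x,y)\leq c\cdot d(x,z)$ whenever $x\prec y\prec z$; it is monotone if it is $c$-monotone for some $c>0$. $CA^\Delta$ is the statement: (i) for every $n\geq2$ and every good type $\tau$ with $n_k\geq n$ for all $k\geq1$ there is an $n$-$\Delta$-capturing construction scheme of type $\tau$ over $\omega_1$; (ii) for every good type $\tau$ with $\langle n_{k+1}\rangle_{k\in\omega}$ non-decreasing and unbounded there is a $\Delta$-capturing construction scheme of type $\tau$ over $\omega_1$. Definitions: a type is a sequence $\tau=\langle m_k,n_{k+1},r_{k+1}\rangle_{k\in\omega}$ of natural numbers with $m_0=1$ and, for all $k$, $n_{k+1}\geq2$, $m_k>r_{k+1}$, $m_{k+1}=r_{k+1}+(m_k-r_{k+1})n_{k+1}$; good if every $r$ equals $r_k$ for infinitely many $k\geq1$. $A<B$ means every element of $A$ is below every element of $B$; $D(a)$ is the $a$-th element of a finite set of ordinals $D$. A construction scheme of type $\tau$ over a set of ordinals $Y$ is a family $\mathcal{F}$ of nonempty finite subsets of $Y$, cofinal among finite subsets of $Y$ under $\subseteq$, each of size $m_k$ for some $k$, with $\mathcal{F}_k=\{F\in\mathcal{F}:|F|=m_k\}$ satisfying: (i) for $E,F\in\mathcal{F}_k$, $E\cap F$ is an initial segment of both; (ii) every $F\in\mathcal{F}_{k+1}$ equals $F_0\cup\dots\cup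 F_{n_{k+1}-1}$ with $F_i\in\mathcal{F}_k$ a $\Delta$-system with root $R(F)$, $|R(F)|=r_{k+1}$, $R(F)<F_0\setminus R(F)<\dots<F_{n_{k+1}-1}\setminus R(F)$. $\rho(\alpha,\beta)=\min\{k:\exists F\in\mathcal{F}_k\ \{\alpha,\beta\}\subseteq F\}$; $\lVert\alpha\rVert_k=|\{\xi<\alpha:\rho(\xi,\alpha)\leq k\}|$; $\Delta(\alpha,\beta)=\min\{k:\lVert\alpha\rVert_k\neq\lVert\beta\rVert_k\}$ ($\omega$ if none); for $k\geq1$, $\Xi_\alpha(k)=-1$ if $\alpha\in R(F)$, $=i$ if $\alpha\in F_i\setminus R(F)$, for any $F\in\mathcal{F}_k$ containing $\alpha$. A root-tail-tail $\Delta$-system is a sequence $\langle D_i\rangle_{i<n}$, $n\geq2$, of finite sets of ordinals of common size $m$ with pairwise intersections $R$, $R<D_i\setminus R$, $D_0\setminus R<\dots<D_{n-1}\setminus R$; $r=|R|$. It is $\Delta$-captured at level $l\geq1$ if $n\leq n_l$, (I) $\Xi_{D_i(a)}(l)=-1$ for $a<r$ and $=i$ for $a\geq r$ ($i<n$, $a<m$), and (II) $\Delta(D_i(a),D_j(a))=l$ for $i<j<n$, $r\leq a<m$. A scheme over $\omega_1$ is $n$-$\Delta$-capturing if for every uncountable family $\mathcal{S}$ of nonempty finite subsets of $\omega_1$ there are infinitely many $l$ for which some $n$ distinct members of $\mathcal{S}$, suitably enumerated, form a root-tail-tail $\Delta$-system $\Delta$-captured at level $l$; $\Delta$-capturing means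 $n$-$\Delta$-capturing for every $n\geq2$. *)

theory Defs
  imports Main "HOL-Library.Countable_Set" "HOL-Library.Extended_Nat"
begin

text \<open>omega_1 is modelled by an arbitrary well-ordered type which is uncountable
and all of whose proper initial segments are countable (such a type is
order-isomorphic to omega_1).\<close>

definition omega1_like :: "'a::wellorder itself \<Rightarrow> bool" where
  "omega1_like _ \<longleftrightarrow> \<not> countable (UNIV :: 'a set) \<and> (\<forall>x::'a. countable {y. y < x})"

definition set_less :: "'a::ord set \<Rightarrow> 'a set \<Rightarrow> bool" where
  "set_less A B \<longleftrightarrow> (\<forall>x\<in>A. \<forall>y\<in>B. x < y)"

text \<open>A type is given by three sequences m, n, r; n k and r k are only used for k >= 1.\<close>

definition is_type :: "(nat \<Rightarrow> nat) \<Rightarrow> (nat \<Rightarrow> nat) \<Rightarrow> (nat \<Rightarrow> nat) \<Rightarrow> bool" where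
  "is_type m n r \<longleftrightarrow> m 0 = 1 \<and>
     (\<forall>k. n (Suc k) \<ge> 2 \<and> m k > r (Suc k) \<and>
          m (Suc k) = r (Suc k) + (m k - r (Suc k)) * n (Suc k))"

definition good_type :: "(nat \<Rightarrow> nat) \<Rightarrow> (nat \<Rightarrow> nat) \<Rightarrow> (nat \<Rightarrow> nat) \<Rightarrow> bool" where
  "good_type m n r \<longleftrightarrow> is_type m n r \<and> (\<forall>x. infinite {k. k \<ge> 1 \<and> r k = x})"

definition level :: "'a set set \<Rightarrow> (nat \<Rightarrow> nat) \<Rightarrow> nat \<Rightarrow> 'a set set" where
  "level FF m k = {F \<in> FF. card F = m k}"

definition is_decomp ::
  "(nat \<Rightarrow> nat) \<Rightarrow> (nat \<Rightarrow> nat) \<Rightarrow> (nat \<Rightarrow> nat) \<Rightarrow> 'a::linorder set set \<Rightarrow> nat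
     \<Rightarrow> 'a set \<Rightarrow> (nat \<Rightarrow> 'a set) \<Rightarrow> 'a set \<Rightarrow> bool" where
  "is_decomp m n r FF k F Fs R \<longleftrightarrow>
     (\<forall>i < n (Suc k). Fs i \<in> level FF m k) \<and>
     F = (\<Union>i < n (Suc k). Fs i) \<and>
     (\<forall>i < n (Suc k). \<forall>j < n (Suc k). i \<noteq> j \<longrightarrow> Fs i \<inter> Fs j = R) \<and>
     card R = r (Suc k) \<and>
     (\<forall>i < n (Suc k). set_less R (Fs i - R)) \<and>
     (\<forall>i j. i < j \<and> j < n (Suc k) \<longrightarrow> set_less (Fs i - R) (Fs j - R))"

definition init_seg_of :: "'a::ord set \<Rightarrow> 'a set \<Rightarrow> bool" where
  "init_seg_of A E \<longleftrightarrow> A \<subseteq> E \<and> (\<forall>x\<in>A. \<forall>y\<in>E. y < x \<longrightarrow> y \<in> A)"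

definition construction_scheme ::
  "(nat \<Rightarrow> nat) \<Rightarrow> (nat \<Rightarrow> nat) \<Rightarrow> (nat \<Rightarrow> nat) \<Rightarrow> 'a::linorder set \<Rightarrow> 'a set set \<Rightarrow> bool" where
  "construction_scheme m n r Y FF \<longleftrightarrow>
     (\<forall>F\<in>FF. F \<noteq> {} \<and> finite F \<and> F \<subseteq> Y \<and> (\<exists>k. card F = m k)) \<and>
     (\<forall>A. finite A \<and> A \<subseteq> Y \<longrightarrow> (\<exists>F\<in>FF. A \<subseteq> F)) \<and>
     (\<forall>k. \<forall>E\<in>level FF m k. \<forall>F\<in>level FF m k.
         init_seg_of (E \<inter> F) E \<and> init_seg_of (E \<inter> F) F) \<and>
     (\<forall>k. \<forall>F\<in>level FF m (Suc k). \<exists>Fs R. is_decomp m n r FF k F Fs R)"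

definition rho :: "'a set set \<Rightarrow> (nat \<Rightarrow> nat) \<Rightarrow> 'a \<Rightarrow> 'a \<Rightarrow> nat" where
  "rho FF m \<alpha> \<beta> = (LEAST k. \<exists>F\<in>level FF m k. {\<alpha>, \<beta>} \<subseteq> F)"

definition knorm :: "'a::ord set set \<Rightarrow> (nat \<Rightarrow> nat) \<Rightarrow> 'a \<Rightarrow> nat \<Rightarrow> nat" where
  "knorm FF m \<alpha> k = card {\<xi>. \<xi> < \<alpha> \<and> rho FF m \<xi> \<alpha> \<le> k}"

definition Delta :: "'a::ord set set \<Rightarrow> (nat \<Rightarrow> nat) \<Rightarrow> 'a \<Rightarrow> 'a \<Rightarrow> enat" where
  "Delta FF m \<alpha> \<beta> =
     (if \<exists>k. knorm FF m \<alpha> k \<noteq> knorm FF m \<beta> k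
      then enat (LEAST k. knorm FF m \<alpha> k \<noteq> knorm FF m \<beta> k) else \<infinity>)"

text \<open>Xi_alpha(k) for k >= 1, computed from some F in level k containing alpha
  (the paper shows the value does not depend on F).\<close>
definition Xi ::
  "(nat \<Rightarrow> nat) \<Rightarrow> (nat \<Rightarrow> nat) \<Rightarrow> (nat \<Rightarrow> nat) \<Rightarrow> 'a::linorder set set \<Rightarrow> nat \<Rightarrow> 'a \<Rightarrow> int" where
  "Xi m n r FF k \<alpha> = (SOME x. \<exists>F\<in>level FF m k. \<alpha> \<in> F \<and>
      (\<exists>Fs R. is_decomp m n r FF (k - 1) F Fs R \<and>
         ((\<alpha> \<in> R \<and> x = -1) \<or> (\<exists>i < n k. \<alpha> \<in> Fs i - R \<and> x = int i))))"

definition nth_elem :: "'a::linorder set \<Rightarrow> nat \<Rightarrow> 'a" where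
  "nth_elem D a = sorted_list_of_set D ! a"

definition rtt_system :: "nat \<Rightarrow> (nat \<Rightarrow> 'a::linorder set) \<Rightarrow> bool" where
  "rtt_system nn D \<longleftrightarrow> nn \<ge> 2 \<and>
     (\<exists>R. (\<forall>i < nn. finite (D i) \<and> card (D i) = card (D 0)) \<and>
          (\<forall>i < nn. \<forall>j < nn. i \<noteq> j \<longrightarrow> D i \<inter> D j = R) \<and>
          (\<forall>i < nn. set_less R (D i - R)) \<and>
          (\<forall>i j. i < j \<and> j < nn \<longrightarrow> set_less (D i - R) (D j - R)))"

text \<open>For a root-tail-tail system, m = card (D 0) and the root is D 0 \<inter> D 1.\<close>
definition delta_captured ::
  "(nat \<Rightarrow> nat) \<Rightarrow> (nat \<Rightarrow> nat) \<Rightarrow> (nat \<Rightarrow> nat) \<Rightarrow> 'a::linorder set set \<Rightarrow> nat \<Rightarrow> nat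
     \<Rightarrow> (nat \<Rightarrow> 'a set) \<Rightarrow> bool" where
  "delta_captured m n r FF l nn D \<longleftrightarrow> l \<ge> 1 \<and> nn \<le> n l \<and>
     (let mm = card (D 0); rr = card (D 0 \<inter> D 1) in
       (\<forall>i < nn. \<forall>a < mm. Xi m n r FF l (nth_elem (D i) a) = (if a < rr then -1 else int i)) \<and>
       (\<forall>i j a. i < j \<and> j < nn \<and> rr \<le> a \<and> a < mm \<longrightarrow>
           Delta FF m (nth_elem (D i) a) (nth_elem (D j) a) = enat l))"

definition n_capturing ::
  "(nat \<Rightarrow> nat) \<Rightarrow> (nat \<Rightarrow> nat) \<Rightarrow> (nat \<Rightarrow> nat) \<Rightarrow> 'a::linorder set set \<Rightarrow> nat \<Rightarrow> bool" where
  "n_capturing m n r FF nn \<longleftrightarrow>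
     (\<forall>S. S \<subseteq> {A. A \<noteq> {} \<and> finite A} \<and> \<not> countable S \<longrightarrow>
        infinite {l. \<exists>D. inj_on D {..<nn} \<and> (\<forall>i < nn. D i \<in> S) \<and>
                         rtt_system nn D \<and> delta_captured m n r FF l nn D})"

definition capturing ::
  "(nat \<Rightarrow> nat) \<Rightarrow> (nat \<Rightarrow> nat) \<Rightarrow> (nat \<Rightarrow> nat) \<Rightarrow> 'a::linorder set set \<Rightarrow> bool" where
  "capturing m n r FF \<longleftrightarrow> (\<forall>nn \<ge> 2. n_capturing m n r FF nn)"

definition CA_Delta :: "'a::wellorder itself \<Rightarrow> bool" where
  "CA_Delta _ \<longleftrightarrow>
     (\<forall>nn \<ge> 2. \<forall>m n r. good_type m n r \<and> (\<forall>k \<ge> 1. n k \<ge> nn) \<longrightarrow>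
        (\<exists>FF :: 'a set set. construction_scheme m n r UNIV FF \<and> n_capturing m n r FF nn)) \<and>
     (\<forall>m n r. good_type m n r \<and> mono (\<lambda>k. n (Suc k)) \<and> (\<forall>b. \<exists>k. n (Suc k) > b) \<longrightarrow>
        (\<exists>FF :: 'a set set. construction_scheme m n r UNIV FF \<and> capturing m n r FF))"

definition is_metric :: "('a \<Rightarrow> 'a \<Rightarrow> real) \<Rightarrow> bool" where
  "is_metric d \<longleftrightarrow> (\<forall>x y. d x y \<ge> 0 \<and> (d x y = 0 \<longleftrightarrow> x = y) \<and> d x y = d y x) \<and>
     (\<forall>x y z. d x z \<le> d x y + d y z)"

definition c_monotone :: "('a \<Rightarrow> 'a \<Rightarrow> real) \<Rightarrow> real \<Rightarrow> 'a set \<Rightarrow> bool" where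
  "c_monotone d c Y \<longleftrightarrow> (\<exists>ord. linear_order_on Y ord \<and>
     (\<forall>x\<in>Y. \<forall>y\<in>Y. \<forall>z\<in>Y. (x, y) \<in> ord \<and> x \<noteq> y \<and> (y, z) \<in> ord \<and> y \<noteq> z \<longrightarrow>
        d x y \<le> c * d x z))"

definition monotone_space :: "('a \<Rightarrow> 'a \<Rightarrow> real) \<Rightarrow> 'a set \<Rightarrow> bool" where
  "monotone_space d Y \<longleftrightarrow> (\<exists>c > 0. c_monotone d c Y)"

end

theory Submission
  imports Defs "HOL-Library.Nat_Bijection"
begin


lemma level_D: "F \<in> level FF m k \<Longrightarrow> F \<in> FF \<and> card F = m k"
  by (simp add: level_def)

lemma cs_member:
  assumes "construction_scheme m n r Y FF" "F \<in> FF"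
  shows "finite F \<and> F \<noteq> {} \<and> F \<subseteq> Y \<and> (\<exists>k. F \<in> level FF m k)"
  using assms unfolding construction_scheme_def level_def by blast

lemma cs_cofinal:
  assumes "construction_scheme m n r Y FF" "finite A" "A \<subseteq> Y"
  shows "\<exists>k. \<exists>F\<in>level FF m k. A \<subseteq> F"
proof -
  obtain F where "F \<in> FF" "A \<subseteq> F" using assms unfolding construction_scheme_def by blast
  then show ?thesis using cs_member[OF assms(1)] by blast
qed

lemma cs_decomp:
  assumes "construction_scheme m n r Y FF" "F \<in> level FF m (Suc k)"
  shows "\<exists>Fs R. is_decomp m n r FF k F Fs R"
  using assms unfolding construction_scheme_def by blast

lemma cs_init:
  assumes cs: "construction_scheme m n r Y FF" and jk: "j \<le> k"
    and E: "E \<in> level FF m j" and F: "F \<in> level FF m k"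
  shows "init_seg_of (E \<inter> F) E"
  using jk F
proof (induction k arbitrary: F rule: dec_induct)
  case base
  then show ?case using cs E unfolding construction_scheme_def by blast
next
  case (step k)
  obtain Fs R where d: "is_decomp m n r FF k F Fs R" using cs_decomp[OF cs step.prems] by blast
  have Fu: "F = (\<Union>i < n (Suc k). Fs i)" and Fl: "\<forall>i < n (Suc k). Fs i \<in> level FF m k"
    using d unfolding is_decomp_def by auto
  have IH: "\<And>i. i < n (Suc k) \<Longrightarrow> init_seg_of (E \<inter> Fs i) E" using step.IH Fl by blast
  show ?case unfolding init_seg_of_def
  proof (intro conjI ballI impI)
    show "E \<inter> F \<subseteq> E" by blast
  next
    fix x y assume x: "x \<in> E \<inter> F" and y: "y \<in> E" and yx: "y < x"
    then obtain i where i: "i < n (Suc k)" "x \<in> Fs i" using Fu by blast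
    then have "y \<in> E \<inter> Fs i" using IH[OF i(1)] x y yx unfolding init_seg_of_def by blast
    then show "y \<in> E \<inter> F" using Fu i by blast
  qed
qed

lemma rho_exists:
  assumes cs: "construction_scheme m n r UNIV FF"
  shows "\<exists>k. \<exists>F\<in>level FF m k. {a, b} \<subseteq> F"
  using cs_cofinal[OF cs, of "{a,b}"] by auto

lemma knorm_eq:
  fixes FF :: "'a::linorder set set"
  assumes cs: "construction_scheme m n r UNIV FF" and F: "F \<in> level FF m k" and aF: "\<alpha> \<in> F"
  shows "knorm FF m \<alpha> k = card {\<xi>\<in>F. \<xi> < \<alpha>}"
proof -
  have "{\<xi>. \<xi> < \<alpha> \<and> rho FF m \<xi> \<alpha> \<le> k} = {\<xi>\<in>F. \<xi> < \<alpha>}"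
  proof (intro set_eqI iffI)
    fix \<xi> assume "\<xi> \<in> {\<xi>. \<xi> < \<alpha> \<and> rho FF m \<xi> \<alpha> \<le> k}"
    then have lt: "\<xi> < \<alpha>" and rk: "rho FF m \<xi> \<alpha> \<le> k" by auto
    have ex: "\<exists>j. \<exists>E\<in>level FF m j. {\<xi>, \<alpha>} \<subseteq> E" using rho_exists[OF cs] .
    obtain E where E: "E \<in> level FF m (rho FF m \<xi> \<alpha>)" "{\<xi>, \<alpha>} \<subseteq> E"
      using LeastI_ex[OF ex] unfolding rho_def by blast
    have "init_seg_of (E \<inter> F) E" using cs_init[OF cs rk E(1) F] .
    then have "\<xi> \<in> E \<inter> F" using E(2) aF lt unfolding init_seg_of_def by blast
    then show "\<xi> \<in> {\<xi>\<in>F. \<xi> < \<alpha>}" using lt by blast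
  next
    fix \<xi> assume "\<xi> \<in> {\<xi>\<in>F. \<xi> < \<alpha>}"
    then have "\<xi> \<in> F" "\<xi> < \<alpha>" by auto
    then have "rho FF m \<xi> \<alpha> \<le> k" unfolding rho_def using F aF
      by (intro Least_le) blast
    then show "\<xi> \<in> {\<xi>. \<xi> < \<alpha> \<and> rho FF m \<xi> \<alpha> \<le> k}" using \<open>\<xi> < \<alpha>\<close> by blast
  qed
  then show ?thesis unfolding knorm_def by simp
qed

lemma knorm_inj:
  fixes FF :: "'a::linorder set set"
  assumes cs: "construction_scheme m n r UNIV FF" and ne: "\<alpha> \<noteq> \<beta>"
  shows "\<exists>k. knorm FF m \<alpha> k \<noteq> knorm FF m \<beta> k"
proof -
  have *: "\<exists>k. knorm FF m a k \<noteq> knorm FF m b k" if "a < b" for a b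
  proof -
    obtain k F where F: "F \<in> level FF m k" "{a, b} \<subseteq> F" using rho_exists[OF cs] by blast
    have fin: "finite F" using cs_member[OF cs] F(1) level_D by blast
    have "{\<xi>\<in>F. \<xi> < a} \<subset> {\<xi>\<in>F. \<xi> < b}" using F(2) that by auto
    then have "card {\<xi>\<in>F. \<xi> < a} < card {\<xi>\<in>F. \<xi> < b}"
      by (intro psubset_card_mono) (use fin in auto)
    then show ?thesis using knorm_eq[OF cs F(1)] F(2) by (intro exI[of _ k]) auto
  qed
  show ?thesis
  proof (cases "\<alpha> < \<beta>")
    case True then show ?thesis using * by blast
  next
    case False then have "\<beta> < \<alpha>" using ne by auto
    then show ?thesis using * by metis
  qed
qed



lemma type_mono:
  assumes "is_type m n r" shows "strict_mono m"
proof (rule strict_mono_Suc_iff[THEN iffD2, rule_format])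
  fix k
  have "n (Suc k) \<ge> 2" "m k > r (Suc k)" "m (Suc k) = r (Suc k) + (m k - r (Suc k)) * n (Suc k)"
    using assms unfolding is_type_def by auto
  moreover have "(m k - r (Suc k)) * n (Suc k) \<ge> (m k - r (Suc k)) * 2"
    using calculation by (intro mult_le_mono2) auto
  ultimately show "m k < m (Suc k)" by linarith
qed

lemma level_down:
  assumes cs: "construction_scheme m n r Y FF" and "k \<le> k'" "F \<in> level FF m k'" "\<alpha> \<in> F"
  shows "\<exists>F'\<in>level FF m k. \<alpha> \<in> F'"
  using assms(2-4)
proof (induction k' arbitrary: F rule: dec_induct)
  case base then show ?case by blast
next
  case (step k')
  obtain Fs R where d: "is_decomp m n r FF k' F Fs R" using cs_decomp[OF cs step.prems(1)] by blast
  then obtain i where "i < n (Suc k')" "\<alpha> \<in> Fs i" "Fs i \<in> level FF m k'"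
    using step.prems(2) unfolding is_decomp_def by blast
  then show ?case using step.IH by blast
qed

lemma level_exists:
  fixes FF :: "'a::linorder set set"
  assumes cs: "construction_scheme m n r UNIV FF" and ty: "is_type m n r"
    and inf: "infinite (UNIV :: 'a set)"
  shows "\<exists>F\<in>level FF m k. \<alpha> \<in> F"
proof -
  obtain B :: "'a set" where B: "finite B" "card B = m k"
    using infinite_arbitrarily_large[OF inf] by blast
  let ?A = "insert \<alpha> B"
  obtain k' F where F: "F \<in> level FF m k'" "?A \<subseteq> F" using cs_cofinal[OF cs, of ?A] B by auto
  have "finite F" using cs_member[OF cs] F(1) level_D by blast
  then have "card ?A \<le> card F" using F(2) card_mono by blast
  moreover have "card B \<le> card ?A" using B by (simp add: card_insert_if)
  ultimately have "m k \<le> m k'" using F(1) B level_D by fastforce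
  then have "k \<le> k'" using type_mono[OF ty] by (simp add: strict_mono_less_eq)
  then show ?thesis using level_down[OF cs _ F(1)] F(2) by blast
qed



lemma xi_link:
  fixes FF :: "'a::linorder set set"
  assumes cs: "construction_scheme m n r UNIV FF" and ty: "is_type m n r"
    and inf: "infinite (UNIV :: 'a set)" and l1: "l \<ge> 1"
    and xi: "Xi m n r FF l \<alpha> = int i"
  shows "i < n l \<and> r l \<le> knorm FF m \<alpha> (l-1) \<and> knorm FF m \<alpha> (l-1) < m (l-1) \<and>
         knorm FF m \<alpha> l = knorm FF m \<alpha> (l-1) + i * (m (l-1) - r l)"
proof -
  define k where "k = l - 1"
  have lk: "l = Suc k" using l1 k_def by simp
  define P where "P = (\<lambda>x. \<exists>F\<in>level FF m l. \<alpha> \<in> F \<and>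
      (\<exists>Fs R. is_decomp m n r FF (l - 1) F Fs R \<and>
         ((\<alpha> \<in> R \<and> x = -1) \<or> (\<exists>i < n l. \<alpha> \<in> Fs i - R \<and> x = int i))))"
  have ex: "\<exists>x. P x"
  proof -
    obtain F where F: "F \<in> level FF m l" "\<alpha> \<in> F" using level_exists[OF cs ty inf] by blast
    obtain Fs R where d: "is_decomp m n r FF k F Fs R" using cs_decomp[OF cs] F(1) lk by blast
    then obtain j where j: "j < n l" "\<alpha> \<in> Fs j" using F(2) lk unfolding is_decomp_def by blast
    show ?thesis
    proof (cases "\<alpha> \<in> R")
      case True then show ?thesis unfolding P_def using F d k_def by blast
    next
      case False then show ?thesis unfolding P_def using F d k_def j by blast
    qed
  qed
  have "P (Xi m n r FF l \<alpha>)" unfolding Xi_def P_def[symmetric] using someI_ex[OF ex] .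
  then have "P (int i)" using xi by simp
  then obtain F Fs R where F: "F \<in> level FF m l" "\<alpha> \<in> F" and d: "is_decomp m n r FF k F Fs R"
    and alt: "(\<alpha> \<in> R \<and> int i = -1) \<or> (\<exists>i' < n l. \<alpha> \<in> Fs i' - R \<and> int i = int i')"
    unfolding P_def k_def by blast
  have i: "i < n l" "\<alpha> \<in> Fs i" "\<alpha> \<notin> R" using alt by auto
  have Fl: "\<And>j. j < n l \<Longrightarrow> Fs j \<in> level FF m k" and Fu: "F = (\<Union>j < n l. Fs j)"
    and Fint: "\<And>j j'. j < n l \<Longrightarrow> j' < n l \<Longrightarrow> j \<noteq> j' \<Longrightarrow> Fs j \<inter> Fs j' = R"
    and cR: "card R = r l"
    and Rl: "\<And>j. j < n l \<Longrightarrow> set_less R (Fs j - R)"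
    and Fo: "\<And>j j'. j < j' \<Longrightarrow> j' < n l \<Longrightarrow> set_less (Fs j - R) (Fs j' - R)"
    using d lk unfolding is_decomp_def by auto
  have n2: "n l \<ge> 2" using ty lk unfolding is_type_def by auto
  have mr: "m k > r l" using ty lk unfolding is_type_def by auto
  have RF: "R \<subseteq> Fs j" if "j < n l" for j
  proof -
    define j' :: nat where "j' = (if j = 0 then 1 else 0)"
    have "j' < n l" "j' \<noteq> j" using n2 j'_def by auto
    then show ?thesis using Fint[OF that] by blast
  qed
  have finF: "finite (Fs j)" "card (Fs j) = m k" if "j < n l" for j
    using Fl[OF that] cs_member[OF cs] level_D by blast+
  have finR: "finite R" using finF(1)[OF i(1)] RF[OF i(1)] finite_subset by blast
  have cD: "card (Fs j - R) = m k - r l" if "j < n l" for j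
    using card_Diff_subset[OF finR RF[OF that]] finF[OF that] cR by simp
  define T where "T = {\<xi>\<in>Fs i - R. \<xi> < \<alpha>}"
  define U where "U = (\<Union>j<i. Fs j - R)"
  have S1: "{\<xi>\<in>Fs i. \<xi> < \<alpha>} = R \<union> T"
  proof -
    have "\<xi> < \<alpha>" if "\<xi> \<in> R" for \<xi> using Rl[OF i(1)] i that unfolding set_less_def by blast
    then show ?thesis unfolding T_def using RF[OF i(1)] by blast
  qed
  have S2: "{\<xi>\<in>F. \<xi> < \<alpha>} = R \<union> U \<union> T"
  proof (intro set_eqI iffI)
    fix \<xi> assume "\<xi> \<in> {\<xi>\<in>F. \<xi> < \<alpha>}"
    then obtain j where j: "j < n l" "\<xi> \<in> Fs j" "\<xi> < \<alpha>" using Fu by auto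
    show "\<xi> \<in> R \<union> U \<union> T"
    proof (cases "\<xi> \<in> R")
      case False
      consider "j < i" | "j = i" | "i < j" by linarith
      then show ?thesis
      proof cases
        case 1 then show ?thesis unfolding U_def using j False by blast
      next
        case 2 then show ?thesis unfolding T_def using j False by blast
      next
        case 3
        then have "\<alpha> < \<xi>" using Fo[OF 3 j(1)] i j(2) False unfolding set_less_def by blast
        then show ?thesis using j(3) by simp
      qed
    qed simp
  next
    fix \<xi> assume a: "\<xi> \<in> R \<union> U \<union> T"
    have RI: "\<xi> \<in> Fs i \<and> \<xi> < \<alpha>" if "\<xi> \<in> R"
      using Rl[OF i(1)] i that RF[OF i(1)] unfolding set_less_def by blast
    have UI: "\<xi> \<in> F \<and> \<xi> < \<alpha>" if xU: "\<xi> \<in> U"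
    proof -
      obtain j where j: "j < i" "\<xi> \<in> Fs j - R" using xU unfolding U_def by blast
      then have "\<xi> < \<alpha>" using Fo[OF j(1) i(1)] i unfolding set_less_def by blast
      then show ?thesis using Fu j i(1) by auto
    qed
    show "\<xi> \<in> {\<xi>\<in>F. \<xi> < \<alpha>}" using a RI UI Fu i(1) unfolding T_def by blast
  qed
  have finT: "finite T" unfolding T_def using finF(1)[OF i(1)] by simp
  have finU: "finite U" unfolding U_def using finF(1) i(1) by auto
  have cU: "card U = i * (m k - r l)"
  proof -
    have "card U = (\<Sum>j<i. card (Fs j - R))" unfolding U_def
    proof (rule card_UN_disjoint)
      show "\<forall>j\<in>{..<i}. finite (Fs j - R)" using finF(1) i(1) by auto
      show "\<forall>j\<in>{..<i}. \<forall>j'\<in>{..<i}. j \<noteq> j' \<longrightarrow> (Fs j - R) \<inter> (Fs j' - R) = {}"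
      proof (intro ballI impI)
        fix j j' assume "j \<in> {..<i}" "j' \<in> {..<i}" "j \<noteq> j'"
        then have "Fs j \<inter> Fs j' = R" using Fint i(1) by simp
        then show "(Fs j - R) \<inter> (Fs j' - R) = {}" by blast
      qed
    qed simp
    also have "\<dots> = (\<Sum>j<i. m k - r l)" using cD i(1) by (intro sum.cong) auto
    finally show ?thesis by simp
  qed
  have d1: "R \<inter> T = {}" "R \<inter> U = {}" "U \<inter> T = {}"
  proof -
    show "R \<inter> T = {}" "R \<inter> U = {}" unfolding T_def U_def by auto
    show "U \<inter> T = {}"
    proof (rule ccontr)
      assume "U \<inter> T \<noteq> {}"
      then obtain x j where "j < i" "x \<in> Fs j" "x \<in> Fs i" "x \<notin> R" unfolding T_def U_def by blast
      moreover have "Fs j \<inter> Fs i = R" using Fint i(1) \<open>j < i\<close> by simp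
      ultimately show False by blast
    qed
  qed
  have k1: "knorm FF m \<alpha> l = r l + i * (m k - r l) + card T"
  proof -
    have "knorm FF m \<alpha> l = card (R \<union> U \<union> T)" using knorm_eq[OF cs F] S2 by simp
    also have "\<dots> = card (R \<union> U) + card T" using d1 finR finU finT by (subst card_Un_disjoint) auto
    also have "\<dots> = card R + card U + card T" using d1 finR finU by (subst card_Un_disjoint) auto
    finally show ?thesis using cR cU by simp
  qed
  have k0: "knorm FF m \<alpha> k = r l + card T"
  proof -
    have "knorm FF m \<alpha> k = card (R \<union> T)" using knorm_eq[OF cs Fl[OF i(1)] i(2)] S1 by simp
    also have "\<dots> = card R + card T" using d1 finR finT by (subst card_Un_disjoint) auto
    finally show ?thesis using cR by simp
  qed
  have k0lt: "knorm FF m \<alpha> k < m k"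
  proof -
    have "{\<xi>\<in>Fs i. \<xi> < \<alpha>} \<subset> Fs i" using i(2) by auto
    then have "card {\<xi>\<in>Fs i. \<xi> < \<alpha>} < card (Fs i)" using finF[OF i(1)] psubset_card_mono by blast
    then show ?thesis using knorm_eq[OF cs Fl[OF i(1)] i(2)] finF(2)[OF i(1)] by simp
  qed
  show ?thesis using i(1) k0 k1 k0lt unfolding k_def[symmetric] by simp
qed



definition cycd :: "nat \<Rightarrow> nat \<Rightarrow> nat \<Rightarrow> real" where
  "cycd N t t' = min \<bar>real t - real t'\<bar> (real N - \<bar>real t - real t'\<bar>)"

definition Mlev :: "nat \<Rightarrow> real" where "Mlev k = real (Suc k)"

definition slev :: "nat \<Rightarrow> real" where "slev k = 1 / (fact (Suc k) :: real)"

definition Hb :: "nat \<Rightarrow> nat \<Rightarrow> nat \<Rightarrow> real" where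
  "Hb k b b' = (if fst (prod_decode b) = fst (prod_decode b')
     then min (Mlev k) (cycd (Suc (fst (prod_decode b))) (snd (prod_decode b) mod Suc (fst (prod_decode b)))
                (snd (prod_decode b') mod Suc (fst (prod_decode b))))
     else Mlev k)"

definition blk :: "(nat \<Rightarrow> nat) \<Rightarrow> (nat \<Rightarrow> nat) \<Rightarrow> nat \<Rightarrow> nat \<Rightarrow> nat" where
  "blk m r k p = (p - r k) div (m (k - 1) - r k)"

definition gg :: "(nat \<Rightarrow> nat) \<Rightarrow> (nat \<Rightarrow> nat) \<Rightarrow> nat \<Rightarrow> nat \<Rightarrow> nat \<Rightarrow> real" where
  "gg m r k p q = max 1 (Hb k (blk m r k p) (blk m r k q))"

definition dl :: "'a::ord set set \<Rightarrow> (nat \<Rightarrow> nat) \<Rightarrow> 'a \<Rightarrow> 'a \<Rightarrow> nat" where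
  "dl FF m a b = (LEAST k. knorm FF m a k \<noteq> knorm FF m b k)"

definition dmet :: "'a::ord set set \<Rightarrow> (nat \<Rightarrow> nat) \<Rightarrow> (nat \<Rightarrow> nat) \<Rightarrow> 'a \<Rightarrow> 'a \<Rightarrow> real" where
  "dmet FF m r a b = (if a = b then 0 else
     slev (dl FF m a b) * gg m r (dl FF m a b) (knorm FF m a (dl FF m a b)) (knorm FF m b (dl FF m a b)))"

lemma cycd_sym: "cycd N a b = cycd N b a"
  unfolding cycd_def by (simp add: abs_minus_commute)

lemma cycd_nonneg: "a \<le> N \<Longrightarrow> b \<le> N \<Longrightarrow> cycd N a b \<ge> 0"
  unfolding cycd_def by (simp add: abs_if)

lemma cycd_tri: "a \<le> N \<Longrightarrow> b \<le> N \<Longrightarrow> c \<le> N \<Longrightarrow> cycd N a c \<le> cycd N a b + cycd N b c"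
  unfolding cycd_def min_def abs_if by (auto split: if_splits)

lemma Mlev_ge1: "Mlev k \<ge> 1" unfolding Mlev_def by simp

lemma Hb_sym: "Hb k b b' = Hb k b' b"
  unfolding Hb_def by (simp add: cycd_sym)

lemma Hb_bounds: "0 \<le> Hb k b b' \<and> Hb k b b' \<le> Mlev k"
proof -
  have M: "Mlev k \<ge> 0" using Mlev_ge1[of k] by linarith
  have "cycd (Suc a) (t mod Suc a) (t' mod Suc a) \<ge> 0" for a t t'
    by (intro cycd_nonneg) (auto intro: less_imp_le)
  then show ?thesis unfolding Hb_def using M by auto
qed

lemma min_tri: "(M::real) \<ge> 0 \<Longrightarrow> c1 \<le> c2 + c3 \<Longrightarrow> c2 \<ge> 0 \<Longrightarrow> c3 \<ge> 0 \<Longrightarrow>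
  min M c1 \<le> min M c2 + min M c3"
  by (simp add: min_def)

lemma Hb_tri: "Hb k x z \<le> Hb k x y + Hb k y z"
proof -
  have b: "\<And>u v. 0 \<le> Hb k u v \<and> Hb k u v \<le> Mlev k" by (rule Hb_bounds)
  show ?thesis
  proof (cases "fst (prod_decode x) = fst (prod_decode y) \<and> fst (prod_decode y) = fst (prod_decode z)")
    case True
    define N where "N = Suc (fst (prod_decode x))"
    have N: "N > 0" using N_def by simp
    have c: "cycd N (snd (prod_decode x) mod N) (snd (prod_decode z) mod N) \<le>
        cycd N (snd (prod_decode x) mod N) (snd (prod_decode y) mod N) + cycd N (snd (prod_decode y) mod N) (snd (prod_decode z) mod N)"
      using N by (intro cycd_tri) (auto intro: less_imp_le)
    have nn: "cycd N (snd (prod_decode u) mod N) (snd (prod_decode v) mod N) \<ge> 0" for u v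
      using N by (intro cycd_nonneg) (auto intro: less_imp_le)
    have M: "Mlev k \<ge> 0" using Mlev_ge1[of k] by linarith
    have eqs: "fst (prod_decode y) = fst (prod_decode x)" "fst (prod_decode z) = fst (prod_decode x)" using True by auto
    show ?thesis unfolding Hb_def using min_tri[OF M c nn[of x y] nn[of y z]] unfolding eqs N_def by simp
  next
    case False
    then show ?thesis
    proof (cases "fst (prod_decode x) = fst (prod_decode z)")
      case True
      then have "Hb k x y = Mlev k \<or> Hb k y z = Mlev k" using False unfolding Hb_def by auto
      then show ?thesis using b[of x y] b[of y z] b[of x z] by linarith
    next
      case F2: False
      then have "Hb k x y = Mlev k \<or> Hb k y z = Mlev k" unfolding Hb_def by auto
      then show ?thesis using b[of x y] b[of y z] b[of x z] by linarith
    qed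
  qed
qed

lemma gg_sym: "gg m r k p q = gg m r k q p" unfolding gg_def by (simp add: Hb_sym)
lemma gg_bounds: "1 \<le> gg m r k p q \<and> gg m r k p q \<le> Mlev k"
  unfolding gg_def using Hb_bounds Mlev_ge1 by auto
lemma gg_tri: "gg m r k p s \<le> gg m r k p q + gg m r k q s"
  unfolding gg_def using Hb_tri[of k "blk m r k p" "blk m r k s" "blk m r k q"] Hb_bounds
  by (simp add: max_def)

lemma slev_pos: "slev k > 0" unfolding slev_def by (simp add: fact_gt_zero)

lemma slev_M: assumes "a < e" shows "slev e * Mlev e \<le> slev a"
proof -
  have f: "(fact (Suc e) :: real) = real (Suc e) * fact e" by (simp add: fact_Suc)
  have pe: "(fact e :: real) > 0" by (simp add: fact_gt_zero)
  have ne: "real (Suc e) \<noteq> 0" by simp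
  have "slev e * Mlev e = 1 / (fact e :: real)" unfolding slev_def Mlev_def f
    using pe ne by (simp del: of_nat_Suc)
  also have "\<dots> \<le> 1 / (fact (Suc a) :: real)"
  proof -
    have "(fact (Suc a) :: real) \<le> fact e" using assms by (intro fact_mono) simp
    then show ?thesis by (intro divide_left_mono) (auto simp: fact_gt_zero)
  qed
  finally show ?thesis unfolding slev_def .
qed



context
  fixes FF :: "'a::linorder set set" and m n r
  assumes cs: "construction_scheme m n r UNIV FF"
begin

lemma dl_diff: "a \<noteq> b \<Longrightarrow> knorm FF m a (dl FF m a b) \<noteq> knorm FF m b (dl FF m a b)"
  unfolding dl_def using LeastI_ex[OF knorm_inj[OF cs]] by blast

lemma dl_below: "k < dl FF m a b \<Longrightarrow> knorm FF m a k = knorm FF m b k"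
  unfolding dl_def using not_less_Least by blast

lemma dl_sym: "dl FF m a b = dl FF m b a"
proof -
  have "(\<lambda>k. knorm FF m a k \<noteq> knorm FF m b k) = (\<lambda>k. knorm FF m b k \<noteq> knorm FF m a k)" by auto
  then show ?thesis unfolding dl_def by simp
qed

lemma dl_eq: "knorm FF m a k \<noteq> knorm FF m b k \<Longrightarrow> (\<And>j. j < k \<Longrightarrow> knorm FF m a j = knorm FF m b j) \<Longrightarrow> dl FF m a b = k"
  unfolding dl_def by (rule Least_equality) (auto simp: not_less[symmetric])

lemma dmet_ne: "a \<noteq> b \<Longrightarrow> dmet FF m r a b = slev (dl FF m a b) * gg m r (dl FF m a b) (knorm FF m a (dl FF m a b)) (knorm FF m b (dl FF m a b))"
  unfolding dmet_def by simp

lemma dmet_pos: "a \<noteq> b \<Longrightarrow> dmet FF m r a b \<ge> slev (dl FF m a b)"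
  using dmet_ne[of a b] slev_pos[of "dl FF m a b"]
    gg_bounds[of m r "dl FF m a b" "knorm FF m a (dl FF m a b)" "knorm FF m b (dl FF m a b)"]
  by (simp add: mult_le_cancel_left1)

lemma dmet_le: "a \<noteq> b \<Longrightarrow> dmet FF m r a b \<le> slev (dl FF m a b) * Mlev (dl FF m a b)"
  using dmet_ne[of a b] slev_pos[of "dl FF m a b"]
    gg_bounds[of m r "dl FF m a b" "knorm FF m a (dl FF m a b)" "knorm FF m b (dl FF m a b)"]
  by (simp add: mult_le_cancel_left)

lemma dmet_sym: "dmet FF m r a b = dmet FF m r b a"
  unfolding dmet_def using dl_sym gg_sym by (auto)

lemma dmet_nonneg: "dmet FF m r a b \<ge> 0"
  using dmet_pos[of a b] slev_pos[of "dl FF m a b"] unfolding dmet_def by (auto split: if_splits)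

lemma dmet_tri: "dmet FF m r x z \<le> dmet FF m r x y + dmet FF m r y z"
proof -
  consider "x = y" | "y = z" | "x = z" | "x \<noteq> y \<and> y \<noteq> z \<and> x \<noteq> z" by blast
  then show ?thesis
  proof cases
    case 1 then show ?thesis using dmet_nonneg by (simp add: dmet_def)
  next
    case 2 then show ?thesis using dmet_nonneg by (simp add: dmet_def)
  next
    case 3 then show ?thesis using dmet_nonneg[of x y] dmet_nonneg[of y z] by (simp add: dmet_def)
  next
    case 4
    then have xy: "x \<noteq> y" and yz: "y \<noteq> z" and xz: "x \<noteq> z" by auto
    define a where "a = dl FF m x y"
    define b where "b = dl FF m y z"
    define e where "e = dl FF m x z"
    have nxy: "dmet FF m r x y \<ge> 0" "dmet FF m r y z \<ge> 0" using dmet_nonneg by auto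
    consider "e < a" | "e < b" | "a < e" | "b < e" | "a = e \<and> b = e" by linarith
    then show ?thesis
    proof cases
      case 1
      have kxy: "knorm FF m x e = knorm FF m y e" using dl_below 1 a_def by blast
      have "dl FF m y z = e"
      proof (rule dl_eq)
        show "knorm FF m y e \<noteq> knorm FF m z e" using dl_diff[OF xz] kxy e_def by simp
        fix j assume j: "j < e"
        then have "knorm FF m x j = knorm FF m y j" using 1 a_def dl_below by simp
        moreover have "knorm FF m x j = knorm FF m z j" using j e_def dl_below by simp
        ultimately show "knorm FF m y j = knorm FF m z j" by simp
      qed
      then have "dmet FF m r y z = dmet FF m r x z" using dmet_ne[OF yz] dmet_ne[OF xz] kxy e_def by simp
      then show ?thesis using nxy by simp
    next
      case 2
      have kyz: "knorm FF m y e = knorm FF m z e" using dl_below 2 b_def by blast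
      have "dl FF m x y = e"
      proof (rule dl_eq)
        show "knorm FF m x e \<noteq> knorm FF m y e" using dl_diff[OF xz] kyz e_def by simp
        fix j assume j: "j < e"
        then have "knorm FF m y j = knorm FF m z j" using 2 b_def dl_below by simp
        moreover have "knorm FF m x j = knorm FF m z j" using j e_def dl_below by simp
        ultimately show "knorm FF m x j = knorm FF m y j" by simp
      qed
      then have "dmet FF m r x y = dmet FF m r x z" using dmet_ne[OF xy] dmet_ne[OF xz] kyz e_def by simp
      then show ?thesis using nxy by simp
    next
      case 3
      have "dmet FF m r x z \<le> slev e * Mlev e" using dmet_le[OF xz] e_def by simp
      also have "\<dots> \<le> slev a" using slev_M[OF 3] .
      also have "\<dots> \<le> dmet FF m r x y" using dmet_pos[OF xy] a_def by simp
      finally show ?thesis using nxy by simp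
    next
      case 4
      have "dmet FF m r x z \<le> slev e * Mlev e" using dmet_le[OF xz] e_def by simp
      also have "\<dots> \<le> slev b" using slev_M[OF 4] .
      also have "\<dots> \<le> dmet FF m r y z" using dmet_pos[OF yz] b_def by simp
      finally show ?thesis using nxy by simp
    next
      case 5
      have "gg m r e (knorm FF m x e) (knorm FF m z e) \<le>
            gg m r e (knorm FF m x e) (knorm FF m y e) + gg m r e (knorm FF m y e) (knorm FF m z e)"
        by (rule gg_tri)
      then have "slev e * gg m r e (knorm FF m x e) (knorm FF m z e) \<le>
            slev e * gg m r e (knorm FF m x e) (knorm FF m y e) + slev e * gg m r e (knorm FF m y e) (knorm FF m z e)"
        using slev_pos[of e] by (simp add: distrib_left[symmetric])
      then show ?thesis using dmet_ne[OF xy] dmet_ne[OF yz] dmet_ne[OF xz] 5 a_def b_def e_def by simp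
    qed
  qed
qed

lemma dmet_metric: "is_metric (dmet FF m r)"
  unfolding is_metric_def
proof (intro conjI allI)
  fix x y z
  show "dmet FF m r x y \<ge> 0" by (rule dmet_nonneg)
  show "dmet FF m r x y = 0 \<longleftrightarrow> x = y"
    using dmet_pos[of x y] slev_pos[of "dl FF m x y"] by (auto simp: dmet_def)
  show "dmet FF m r x y = dmet FF m r y x" by (rule dmet_sym)
  show "dmet FF m r x z \<le> dmet FF m r x y + dmet FF m r y z" by (rule dmet_tri)
qed

end



lemma ivt_path:
  assumes "(p 0, z) \<in> ord" "(z, p k) \<in> ord"
    and "\<And>s. s \<le> k \<Longrightarrow> p s \<noteq> z \<and> ((p s, z) \<in> ord \<or> (z, p s) \<in> ord)"
    and "\<And>x. (x, z) \<in> ord \<Longrightarrow> (z, x) \<in> ord \<Longrightarrow> x = z"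
  shows "\<exists>i<k. (p i, z) \<in> ord \<and> (z, p (Suc i)) \<in> ord"
  using assms(2,3)
proof (induction k)
  case 0
  then show ?case using assms(1,4) by blast
next
  case (Suc k)
  show ?case
  proof (cases "(p k, z) \<in> ord")
    case True then show ?thesis using Suc.prems by blast
  next
    case False
    then have "(z, p k) \<in> ord" using Suc.prems(2)[of k] by auto
    then have "\<exists>i<k. (p i, z) \<in> ord \<and> (z, p (Suc i)) \<in> ord" using Suc.IH Suc.prems(2) by simp
    then obtain i where "i < k" "(p i, z) \<in> ord \<and> (z, p (Suc i)) \<in> ord" by blast
    then show ?thesis by (intro exI[of _ i]) simp
  qed
qed

locale monsp =
  fixes d :: "'b \<Rightarrow> 'b \<Rightarrow> real" and Y :: "'b set" and ord :: "'b rel" and c :: real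
  assumes lin: "linear_order_on Y ord"
    and mon: "\<forall>x\<in>Y. \<forall>y\<in>Y. \<forall>z\<in>Y. (x, y) \<in> ord \<and> x \<noteq> y \<and> (y, z) \<in> ord \<and> y \<noteq> z \<longrightarrow> d x y \<le> c * d x z"
    and dsym: "\<And>x y. d x y = d y x"
begin

lemma antis: "(x, y) \<in> ord \<Longrightarrow> (y, x) \<in> ord \<Longrightarrow> x = y"
  using lin unfolding linear_order_on_def partial_order_on_def antisym_def by blast

lemma tot: "x \<in> Y \<Longrightarrow> y \<in> Y \<Longrightarrow> x \<noteq> y \<Longrightarrow> (x, y) \<in> ord \<or> (y, x) \<in> ord"
  using lin unfolding linear_order_on_def total_on_def by blast

lemma trans': "(x, y) \<in> ord \<Longrightarrow> (y, z) \<in> ord \<Longrightarrow> (x, z) \<in> ord"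
  using lin unfolding linear_order_on_def partial_order_on_def preorder_on_def trans_def by blast

lemma path_dir:
  assumes pY: "\<And>s. s \<le> k \<Longrightarrow> p s \<in> Y" and zY: "z \<in> Y"
    and pz: "\<And>s. s \<le> k \<Longrightarrow> p s \<noteq> z"
    and far: "\<And>s. s \<le> k \<Longrightarrow> d (p s) z > c * e"
    and step: "\<And>s. s < k \<Longrightarrow> d (p s) (p (Suc s)) = e"
    and o: "(p 0, z) \<in> ord" "(z, p k) \<in> ord"
  shows False
proof -
  have "\<exists>i<k. (p i, z) \<in> ord \<and> (z, p (Suc i)) \<in> ord"
    using o antis tot pY zY pz by (intro ivt_path) auto
  then obtain i where i: "i < k" "(p i, z) \<in> ord" "(z, p (Suc i)) \<in> ord" by blast
  have "d (p i) z \<le> c * d (p i) (p (Suc i))"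
    using mon pY[of i] pY[of "Suc i"] zY pz[of i] pz[of "Suc i"] i by auto
  then show False using step[OF i(1)] far[of i] i(1) by simp
qed

lemma path_between:
  assumes pY: "\<And>s. s \<le> k \<Longrightarrow> p s \<in> Y" and zY: "z \<in> Y"
    and pz: "\<And>s. s \<le> k \<Longrightarrow> p s \<noteq> z"
    and far: "\<And>s. s \<le> k \<Longrightarrow> d (p s) z > c * e"
    and step: "\<And>s. s < k \<Longrightarrow> d (p s) (p (Suc s)) = e"
  shows "\<not> ((p 0, z) \<in> ord \<and> (z, p k) \<in> ord) \<and> \<not> ((p k, z) \<in> ord \<and> (z, p 0) \<in> ord)"
proof (intro conjI notI)
  assume "(p 0, z) \<in> ord \<and> (z, p k) \<in> ord"
  then show False by (intro path_dir[of k p z e, OF pY zY pz far step]) auto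
next
  assume o: "(p k, z) \<in> ord \<and> (z, p 0) \<in> ord"
  define q where "q s = p (k - s)" for s
  show False
  proof (rule path_dir[of k q z e])
    show "q s \<in> Y" if "s \<le> k" for s using pY q_def by simp
    show "q s \<noteq> z" if "s \<le> k" for s using pz q_def by simp
    show "d (q s) z > c * e" if "s \<le> k" for s using far q_def by simp
    show "d (q s) (q (Suc s)) = e" if "s < k" for s
    proof -
      have "k - s = Suc (k - Suc s)" using that by simp
      then show ?thesis using step[of "k - Suc s"] that q_def dsym by simp
    qed
    show "(q 0, z) \<in> ord" "(z, q k) \<in> ord" using o q_def by auto
  qed (rule zY)
qed

end



context monsp
begin

lemma cyc_path:
  fixes A :: nat and P :: "nat \<Rightarrow> 'b" and pos :: "nat \<Rightarrow> nat"
  assumes cA: "real A > c" and Mv: "Mv > c" "Mv \<ge> 1" and sv: "sv > 0"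
    and dist: "\<And>t t'. t < 3*A \<Longrightarrow> t' < 3*A \<Longrightarrow> t \<noteq> t' \<Longrightarrow> d (P t) (P t') = sv * max 1 (min Mv (cycd (3*A) t t'))"
    and inj: "inj_on P {..<3*A}" and PY: "\<And>t. t < 3*A \<Longrightarrow> P t \<in> Y"
    and pl: "\<And>s. s \<le> k \<Longrightarrow> pos s < 3*A" and zl: "zp < 3*A"
    and pne: "\<And>s. s \<le> k \<Longrightarrow> pos s \<noteq> zp"
    and pfar: "\<And>s. s \<le> k \<Longrightarrow> cycd (3*A) (pos s) zp \<ge> A"
    and pstep: "\<And>s. s < k \<Longrightarrow> cycd (3*A) (pos s) (pos (Suc s)) = 1 \<and> pos s \<noteq> pos (Suc s)"
  shows "\<not> ((P (pos 0), P zp) \<in> ord \<and> (P zp, P (pos k)) \<in> ord) \<and>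
         \<not> ((P (pos k), P zp) \<in> ord \<and> (P zp, P (pos 0)) \<in> ord)"
proof (rule path_between[of k "\<lambda>s. P (pos s)" "P zp" sv])
  show "P (pos s) \<in> Y" if "s \<le> k" for s using PY pl that by blast
  show "P zp \<in> Y" using PY zl by blast
  show "P (pos s) \<noteq> P zp" if "s \<le> k" for s
    using inj pl[OF that] zl pne[OF that] unfolding inj_on_def by blast
  show "c * sv < d (P (pos s)) (P zp)" if "s \<le> k" for s
  proof -
    have "min Mv (cycd (3*A) (pos s) zp) > c" using pfar[OF that] cA Mv by simp
    then have "max 1 (min Mv (cycd (3*A) (pos s) zp)) > c" by (simp add: less_max_iff_disj)
    then have "sv * max 1 (min Mv (cycd (3*A) (pos s) zp)) > sv * c" using sv by simp
    then show ?thesis using dist[OF pl[OF that] zl pne[OF that]] by (simp add: mult.commute)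
  qed
  show "d (P (pos s)) (P (pos (Suc s))) = sv" if "s < k" for s
    using dist[OF pl pl] pstep[OF that] that Mv by simp
qed

lemma cycle_contra:
  fixes A :: nat and P :: "nat \<Rightarrow> 'b"
  assumes A1: "A \<ge> 1" and cA: "real A > c" and Mv: "Mv > c" "Mv \<ge> 1" and sv: "sv > 0"
    and dist: "\<And>t t'. t < 3*A \<Longrightarrow> t' < 3*A \<Longrightarrow> t \<noteq> t' \<Longrightarrow> d (P t) (P t') = sv * max 1 (min Mv (cycd (3*A) t t'))"
    and inj: "inj_on P {..<3*A}" and PY: "\<And>t. t < 3*A \<Longrightarrow> P t \<in> Y"
  shows False
proof -
  note cp = cyc_path[OF cA Mv sv dist inj PY]
  have N1: "\<not> ((P 0, P (2*A)) \<in> ord \<and> (P (2*A), P A) \<in> ord) \<and>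
         \<not> ((P A, P (2*A)) \<in> ord \<and> (P (2*A), P 0) \<in> ord)"
  proof -
    have "\<not> ((P ((\<lambda>s. s) 0), P (2*A)) \<in> ord \<and> (P (2*A), P ((\<lambda>s. s) A)) \<in> ord) \<and>
         \<not> ((P ((\<lambda>s. s) A), P (2*A)) \<in> ord \<and> (P (2*A), P ((\<lambda>s. s) 0)) \<in> ord)"
      by (rule cp) (use A1 in \<open>auto simp: cycd_def min_def abs_if split: if_splits\<close>)
    then show ?thesis by simp
  qed
  have N2: "\<not> ((P A, P 0) \<in> ord \<and> (P 0, P (2*A)) \<in> ord) \<and>
         \<not> ((P (2*A), P 0) \<in> ord \<and> (P 0, P A) \<in> ord)"
  proof -
    have "\<not> ((P ((\<lambda>s. A + s) 0), P 0) \<in> ord \<and> (P 0, P ((\<lambda>s. A + s) A)) \<in> ord) \<and>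
         \<not> ((P ((\<lambda>s. A + s) A), P 0) \<in> ord \<and> (P 0, P ((\<lambda>s. A + s) 0)) \<in> ord)"
      by (rule cp) (use A1 in \<open>auto simp: cycd_def min_def abs_if split: if_splits\<close>)
    then show ?thesis by (simp add: mult_2)
  qed
  have N3: "\<not> ((P (2*A), P A) \<in> ord \<and> (P A, P 0) \<in> ord) \<and>
         \<not> ((P 0, P A) \<in> ord \<and> (P A, P (2*A)) \<in> ord)"
  proof -
    define q where "q = (\<lambda>s. if s < A then 2*A + s else (0::nat))"
    have "\<not> ((P (q 0), P A) \<in> ord \<and> (P A, P (q A)) \<in> ord) \<and>
         \<not> ((P (q A), P A) \<in> ord \<and> (P A, P (q 0)) \<in> ord)"
    proof (rule cp)
      show "q s < 3 * A" if "s \<le> A" for s using that A1 unfolding q_def by auto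
      show "q s \<noteq> A" if "s \<le> A" for s using that A1 unfolding q_def by auto
      show "real A \<le> cycd (3 * A) (q s) A" if "s \<le> A" for s
        using that A1 unfolding q_def by (auto simp: cycd_def min_def abs_if split: if_splits)
      show "cycd (3 * A) (q s) (q (Suc s)) = 1 \<and> q s \<noteq> q (Suc s)" if "s < A" for s
        using that A1 unfolding q_def by (auto simp: cycd_def min_def abs_if split: if_splits)
    qed (use A1 in auto)
    then show ?thesis using A1 unfolding q_def by simp
  qed
  have Y3: "P 0 \<in> Y" "P A \<in> Y" "P (2*A) \<in> Y" using PY A1 by auto
  have D3: "P 0 \<noteq> P A" "P A \<noteq> P (2*A)" "P 0 \<noteq> P (2*A)"
  proof -
    have m: "0 < 3*A" "A < 3*A" "2*A < 3*A" using A1 by auto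
    have mm: "0 \<in> {..<3*A}" "A \<in> {..<3*A}" "2*A \<in> {..<3*A}" using m by auto
    show "P 0 \<noteq> P A" using inj_onD[OF inj _ mm(1) mm(2)] A1 by fastforce
    show "P A \<noteq> P (2*A)" using inj_onD[OF inj _ mm(2) mm(3)] A1 by fastforce
    show "P 0 \<noteq> P (2*A)" using inj_onD[OF inj _ mm(1) mm(3)] A1 by fastforce
  qed
  show False using N1 N2 N3 Y3 D3 tot trans' antis by metis
qed

end



definition nT :: "nat \<Rightarrow> nat" where "nT k = Suc k"
definition rT :: "nat \<Rightarrow> nat" where "rT k = (case k of 0 \<Rightarrow> 0 | Suc j \<Rightarrow> fst (prod_decode j))"
primrec mT :: "nat \<Rightarrow> nat" where
  "mT 0 = 1"
| "mT (Suc k) = rT (Suc k) + (mT k - rT (Suc k)) * nT (Suc k)"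

lemma rT_le: "rT (Suc k) \<le> k"
proof -
  have "fst (prod_decode k) \<le> prod_encode (fst (prod_decode k), snd (prod_decode k))"
    by (rule le_prod_encode_1)
  then show ?thesis unfolding rT_def by simp
qed

lemma mT_ge: "mT k \<ge> Suc k"
proof (induction k)
  case 0 then show ?case by simp
next
  case (Suc k)
  have r: "rT (Suc k) \<le> k" by (rule rT_le)
  define w where "w = mT k - rT (Suc k)"
  have w: "mT k = rT (Suc k) + w" "w \<ge> 1" using Suc r w_def by auto
  have "w * nT (Suc k) \<ge> w * 2"
    unfolding nT_def by (intro mult_le_mono2) simp
  then have "mT (Suc k) \<ge> rT (Suc k) + w * 2" using w_def by simp
  then show ?case using Suc w by linarith
qed

lemma good_T: "good_type mT nT rT"
  unfolding good_type_def
proof (intro conjI allI)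
  show "is_type mT nT rT" unfolding is_type_def
  proof (intro conjI allI)
    fix k
    show "2 \<le> nT (Suc k)" unfolding nT_def by simp
    show "rT (Suc k) < mT k" using rT_le[of k] mT_ge[of k] by simp
  qed simp_all
next
  fix x
  have "range (\<lambda>b. Suc (prod_encode (x, b))) \<subseteq> {k. k \<ge> 1 \<and> rT k = x}"
    unfolding rT_def by auto
  moreover have "infinite (range (\<lambda>b. Suc (prod_encode (x, b))))"
    by (rule range_inj_infinite) (auto simp: inj_def)
  ultimately show "infinite {k. k \<ge> 1 \<and> rT k = x}" using infinite_super by blast
qed

lemma prod_encode_mono2: "t \<le> a \<Longrightarrow> prod_encode (a, t) \<le> prod_encode (a, a)"
proof -
  assume "t \<le> a"
  then have "triangle (a + t) \<le> triangle (a + a)"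
    unfolding triangle_def by (intro div_le_mono mult_le_mono) auto
  then show ?thesis unfolding prod_encode_def by simp
qed



lemma captured_facts:
  fixes FF :: "'a::linorder set set"
  assumes cs: "construction_scheme m n r UNIV FF" and ty: "is_type m n r"
    and inf: "infinite (UNIV :: 'a set)" and l1: "l \<ge> 1"
    and XI: "\<And>i. i < nn \<Longrightarrow> Xi m n r FF l (y i) = int i"
    and DL: "\<And>i j. i < j \<Longrightarrow> j < nn \<Longrightarrow> dl FF m (y i) (y j) = l"
    and ij: "i < nn" "j < nn" "i \<noteq> j" and yinj: "y i \<noteq> y j"
  shows "dmet FF m r (y i) (y j) = slev l * max 1 (Hb l i j)"
proof -
  have blk: "blk m r l (knorm FF m (y k) l) = k" if k: "k < nn" for k
  proof -
    note L = xi_link[OF cs ty inf l1 XI[OF k]]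
    have q: "knorm FF m (y k) (l - 1) = knorm FF m (y 0) (l - 1)"
    proof (cases "k = 0")
      case False
      then have "dl FF m (y 0) (y k) = l" using DL k by simp
      then show ?thesis using dl_below[OF cs, of "l - 1" "y 0" "y k"] l1 by simp
    qed simp
    define q0 where "q0 = knorm FF m (y 0) (l - 1)"
    define w where "w = m (l - 1) - r l"
    have h: "r l \<le> q0" "q0 < r l + w" "knorm FF m (y k) l = q0 + k * w" using L q q0_def w_def by auto
    then have "knorm FF m (y k) l - r l = (q0 - r l) + k * w" by simp
    moreover have "q0 - r l < w" using h by simp
    ultimately have "(knorm FF m (y k) l - r l) div w = k" by simp
    then show ?thesis unfolding blk_def w_def .
  qed
  have dlij: "dl FF m (y i) (y j) = l"
  proof (cases "i < j")
    case True then show ?thesis using DL ij by simp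
  next
    case False then have "j < i" using ij by simp
    then show ?thesis using DL ij dl_sym[OF cs] by metis
  qed
  show ?thesis using dmet_ne[OF cs yinj] dlij blk[OF ij(1)] blk[OF ij(2)] unfolding gg_def by simp
qed

theorem mainTheorem15:
  assumes "omega1_like TYPE('a::wellorder)"
    and "CA_Delta TYPE('a)"
  shows "\<exists>d :: 'a \<Rightarrow> 'a \<Rightarrow> real. is_metric d \<and>
           (\<forall>Y. \<not> countable Y \<longrightarrow> \<not> monotone_space d Y)"
proof -
  have inf: "infinite (UNIV :: 'a set)" using assms(1) countable_finite unfolding omega1_like_def by blast
  have ty: "is_type mT nT rT" using good_T unfolding good_type_def by blast
  have monoT: "mono (\<lambda>k. nT (Suc k))" unfolding nT_def mono_def by simp
  have unb: "\<forall>b. \<exists>k. nT (Suc k) > b" unfolding nT_def by (metis lessI less_SucI)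
  obtain FF :: "'a set set" where cs: "construction_scheme mT nT rT UNIV FF" and cap: "capturing mT nT rT FF"
    using assms(2) good_T monoT unb unfolding CA_Delta_def by blast
  define d where "d = dmet FF mT rT"
  have "is_metric d" unfolding d_def by (rule dmet_metric[OF cs])
  moreover have "\<not> monotone_space d Y" if unc: "\<not> countable Y" for Y
  proof
    assume "monotone_space d Y"
    then obtain c ord where cpos: "c > 0" and lin: "linear_order_on Y ord"
      and mon: "\<forall>x\<in>Y. \<forall>y\<in>Y. \<forall>z\<in>Y. (x, y) \<in> ord \<and> x \<noteq> y \<and> (y, z) \<in> ord \<and> y \<noteq> z \<longrightarrow> d x y \<le> c * d x z"
      unfolding monotone_space_def c_monotone_def by blast
    interpret monsp d Y ord c
      using lin mon dmet_sym[OF cs] unfolding d_def by unfold_locales auto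
    define A where "A = nat \<lceil>c\<rceil> + 1"
    have A1: "A \<ge> 1" using A_def by simp
    have cA: "real A > c" unfolding A_def by linarith
    define a where "a = 3 * A - 1"
    have Na: "Suc a = 3 * A" using A1 a_def by simp
    define nn where "nn = Suc (prod_encode (a, a))"
    have nn2: "nn \<ge> 2" using le_prod_encode_1[of a a] A1 a_def nn_def by simp
    define S where "S = (\<lambda>y. {y}) ` Y"
    have S1: "S \<subseteq> {A. A \<noteq> {} \<and> finite A}" unfolding S_def by auto
    have S2: "\<not> countable S"
    proof
      assume "countable S"
      then have "countable Y" using countable_image_inj_on[of "\<lambda>y. {y}" Y] unfolding S_def inj_on_def by blast
      then show False using unc by blast
    qed
    have "n_capturing mT nT rT FF nn" using cap nn2 unfolding capturing_def by blast
    then have "infinite {l. \<exists>D. inj_on D {..<nn} \<and> (\<forall>i < nn. D i \<in> S) \<and>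
                         rtt_system nn D \<and> delta_captured mT nT rT FF l nn D}"
      using S1 S2 unfolding n_capturing_def by blast
    then obtain l where lA: "l \<ge> A" and "\<exists>D. inj_on D {..<nn} \<and> (\<forall>i < nn. D i \<in> S) \<and>
                         rtt_system nn D \<and> delta_captured mT nT rT FF l nn D"
      unfolding infinite_nat_iff_unbounded_le by blast
    then obtain D where Dinj: "inj_on D {..<nn}" and DS: "\<forall>i < nn. D i \<in> S"
      and dc: "delta_captured mT nT rT FF l nn D" by blast
    define y where "y i = the_elem (D i)" for i
    have Dy: "D i = {y i} \<and> y i \<in> Y" if "i < nn" for i using DS that unfolding S_def y_def by auto
    have yinj: "y i \<noteq> y j" if "i < nn" "j < nn" "i \<noteq> j" for i j
      using Dinj that Dy[OF that(1)] Dy[OF that(2)] unfolding inj_on_def by auto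
    have l1: "l \<ge> 1" using dc unfolding delta_captured_def by simp
    have c0: "card (D 0) = 1" using Dy[of 0] nn2 by simp
    have c01: "card (D 0 \<inter> D 1) = 0" using Dy[of 0] Dy[of 1] yinj[of 0 1] nn2 by simp
    have nth: "nth_elem (D i) 0 = y i" if "i < nn" for i
      using Dy[OF that] unfolding nth_elem_def by simp
    have XI: "Xi mT nT rT FF l (y i) = int i" if "i < nn" for i
    proof -
      have "\<forall>i < nn. \<forall>a < 1. Xi mT nT rT FF l (nth_elem (D i) a) = (if a < 0 then -1 else int i)"
        using dc c0 c01 unfolding delta_captured_def Let_def by simp
      then have "Xi mT nT rT FF l (nth_elem (D i) 0) = int i" using that by simp
      then show ?thesis using nth[OF that] by simp
    qed
    have DLT: "Delta FF mT (y i) (y j) = enat l" if "i < j" "j < nn" for i j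
    proof -
      have "i < nn" using that by simp
      have "\<forall>i j. i < j \<and> j < nn \<longrightarrow> Delta FF mT (nth_elem (D i) 0) (nth_elem (D j) 0) = enat l"
        using dc c0 c01 unfolding delta_captured_def Let_def by simp
      then have "Delta FF mT (nth_elem (D i) 0) (nth_elem (D j) 0) = enat l" using that by blast
      then show ?thesis using nth[OF \<open>i < nn\<close>] nth[OF that(2)] by simp
    qed
    have DL: "dl FF mT (y i) (y j) = l" if "i < j" "j < nn" for i j
    proof -
      have "Delta FF mT (y i) (y j) = enat l" using DLT[OF that] .
      then show ?thesis unfolding Delta_def dl_def by (auto split: if_splits)
    qed
    define P where "P t = y (prod_encode (a, t))" for t
    have pe: "prod_encode (a, t) < nn" if "t < 3 * A" for t
      using prod_encode_mono2[of t a] that Na nn_def by simp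
    show False
    proof (rule cycle_contra[of A "Mlev l" "slev l" P])
      show "1 \<le> A" by (rule A1)
      show "c < real A" by (rule cA)
      show "c < Mlev l" using cA lA unfolding Mlev_def by simp
      show "1 \<le> Mlev l" by (rule Mlev_ge1)
      show "0 < slev l" by (rule slev_pos)
      show "inj_on P {..<3 * A}"
      proof (rule inj_onI)
        fix t t' assume t: "t \<in> {..<3 * A}" "t' \<in> {..<3 * A}" and eq: "P t = P t'"
        show "t = t'"
        proof (rule ccontr)
          assume "t \<noteq> t'"
          then have "prod_encode (a, t) \<noteq> prod_encode (a, t')" by simp
          then have "P t \<noteq> P t'" unfolding P_def using yinj pe t by simp
          then show False using eq by simp
        qed
      qed
      show "P t \<in> Y" if "t < 3 * A" for t using Dy pe[OF that] unfolding P_def by blast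
      show "d (P t) (P t') = slev l * max 1 (min (Mlev l) (cycd (3 * A) t t'))"
        if "t < 3 * A" "t' < 3 * A" "t \<noteq> t'" for t t'
      proof -
        have ne: "prod_encode (a, t) \<noteq> prod_encode (a, t')" using that by simp
        have "d (P t) (P t') = slev l * max 1 (Hb l (prod_encode (a, t)) (prod_encode (a, t')))"
          unfolding d_def P_def
          by (rule captured_facts[OF cs ty inf l1 XI DL pe[OF that(1)] pe[OF that(2)] ne])
             (use yinj pe that ne in auto)
        also have "Hb l (prod_encode (a, t)) (prod_encode (a, t')) = min (Mlev l) (cycd (3 * A) t t')"
          unfolding Hb_def using that Na by simp
        finally show ?thesis .
      qed
    qed
  qed
  ultimately show ?thesis by blast
qed

end
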